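(* Let $\mathcal N$ and $\mathcal M$ be quantum channels satisfying $s$-detailed balance with respect to $\rho_\beta$, with $\mathcal N$ having $\rho_\beta$ as unique fixed state and spectrum in $[0,1]$. Run the single-trajectory algorithm with initial state $\rho_\beta$ and $T_{burn}=0$, and let $v=\mathbb E_{\rho_\beta}(\mathcal M)$. Then for all integers $t,p>0$ with $t+p\le K$, $$\mathbb E_{\rho_\beta}\big[(e_t-v)(e_{t+p}-v)\big]=\sum_{j\ge2}\alpha_{1j}\alpha_{j1}\lambda_j^{p-1}.$$
   Context: $H$ is an $n$-qubit Hermitian operator, $\beta>0$, $\rho_\beta=e^{-\beta H}/\operatorname{tr}(e^{-\beta H})$. $\mathcal T^\dagger$ is the Hilbert–Schmidt adjoint of a linear map (for a channel with Kraus $K_u$, $\mathcal T^\dagger(X)=\sum_uK_u^\dagger XK_u$). $\langle A,B\rangle_s=\operatorname{tr}(A^\dagger\rho_\beta^{1-s}B\rho_\beta^s)$; a map satisfies $s$-detailed balance if $\langle A,\mathcal T^\dagger(B)\rangle_s=\langle\mathcal T^\dagger(A),B\rangle_s$ for all $A,B$. $\mathcal M$ has Kraus operators $\{O_u\}_u$ indexed by finitely many real outcomes $u$. $\mathbb E_{\rho_\beta}(\mathcal M)=\sum_uu\operatorname{tr}(O_u\rho_\beta O_u^\dagger)$, $\widehat{\mathcal M}(X)=\sum_u(u-\mathbb E_{\rho_\beta}(\mathcal M))O_uXO_u^\dagger$, $\mathcal E=\mathcal M\circ\mathcal N\circ\mathcal M$, $\widehat{\mathcal E}=\mathcal M\circ\mathcal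 N\circ\widehat{\mathcal M}$. $\{Y_i\}_i$ is a $\langle\cdot,\cdot\rangle_s$-orthonormal basis of matrices with $\mathcal E^\dagger(Y_i)=\lambda_iY_i$, $1=\lambda_1>\lambda_2\ge\dots\ge0$, $Y_1=I$; $\alpha_{ij}=\langle Y_j,\widehat{\mathcal E}^\dagger(Y_i)\rangle_s$. Single-trajectory algorithm: starting from the given initial state, apply $\mathcal N$ $T_{burn}$ times, then for $t=1,\dots,K$ apply $\mathcal M$ (record outcome $e_t$), then $\mathcal N$, then $\mathcal M$ (outcome discarded). $\mathbb E_{\rho_\beta}$ is expectation over this process started from $\rho_\beta$. *)

theory Defs
  imports "HOL-Analysis.Analysis" "Jordan_Normal_Form.Matrix" "Jordan_Normal_Form.Conjugate"
begin

(* All matrices are d x d complex matrices, d = 2^n for an n-qubit system. *)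

definition adj :: "complex mat \<Rightarrow> complex mat" where
  "adj A = mat (dim_col A) (dim_row A) (\<lambda>(i,j). cnj (A $$ (j,i)))"

definition mtrace :: "complex mat \<Rightarrow> complex" where
  "mtrace A = (\<Sum>i<dim_row A. A $$ (i,i))"

definition mexp :: "complex mat \<Rightarrow> complex mat" where
  "mexp A = mat (dim_row A) (dim_col A)
     (\<lambda>(i,j). (\<Sum>k. (A ^\<^sub>m k) $$ (i,j) / of_nat (fact k)))"

definition partfun :: "complex mat \<Rightarrow> real \<Rightarrow> real" where
  "partfun H \<beta> = Re (mtrace (mexp ((- complex_of_real \<beta>) \<cdot>\<^sub>m H)))"

definition gibbs_pow :: "complex mat \<Rightarrow> real \<Rightarrow> real \<Rightarrow> complex mat" where
  "gibbs_pow H \<beta> r = complex_of_real (1 / (partfun H \<beta> powr r)) \<cdot>\<^sub>m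
      mexp ((- complex_of_real (r * \<beta>)) \<cdot>\<^sub>m H)"

definition gibbs :: "complex mat \<Rightarrow> real \<Rightarrow> complex mat" where
  "gibbs H \<beta> = (1 / mtrace (mexp ((- complex_of_real \<beta>) \<cdot>\<^sub>m H))) \<cdot>\<^sub>m
      mexp ((- complex_of_real \<beta>) \<cdot>\<^sub>m H)"

definition msum :: "nat \<Rightarrow> 'i set \<Rightarrow> ('i \<Rightarrow> complex mat) \<Rightarrow> complex mat" where
  "msum d I f = mat d d (\<lambda>(i,j). \<Sum>u\<in>I. f u $$ (i,j))"

definition kraus_map :: "nat \<Rightarrow> 'i set \<Rightarrow> ('i \<Rightarrow> complex mat) \<Rightarrow> complex mat \<Rightarrow> complex mat" where
  "kraus_map d I K X = msum d I (\<lambda>u. K u * X * adj (K u))"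

definition kraus_adj :: "nat \<Rightarrow> 'i set \<Rightarrow> ('i \<Rightarrow> complex mat) \<Rightarrow> complex mat \<Rightarrow> complex mat" where
  "kraus_adj d I K X = msum d I (\<lambda>u. adj (K u) * X * K u)"

definition is_channel :: "nat \<Rightarrow> 'i set \<Rightarrow> ('i \<Rightarrow> complex mat) \<Rightarrow> bool" where
  "is_channel d I K \<longleftrightarrow> finite I \<and> I \<noteq> {} \<and> (\<forall>u\<in>I. K u \<in> carrier_mat d d) \<and>
     msum d I (\<lambda>u. adj (K u) * K u) = 1\<^sub>m d"

definition s_inner :: "complex mat \<Rightarrow> real \<Rightarrow> real \<Rightarrow> complex mat \<Rightarrow> complex mat \<Rightarrow> complex" where
  "s_inner H \<beta> s A B = mtrace (adj A * gibbs_pow H \<beta> (1 - s) * B * gibbs_pow H \<beta> s)"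

definition s_detailed_balance ::
  "nat \<Rightarrow> complex mat \<Rightarrow> real \<Rightarrow> real \<Rightarrow> (complex mat \<Rightarrow> complex mat) \<Rightarrow> bool" where
  "s_detailed_balance d H \<beta> s Tadj \<longleftrightarrow>
     (\<forall>A\<in>carrier_mat d d. \<forall>B\<in>carrier_mat d d.
        s_inner H \<beta> s A (Tadj B) = s_inner H \<beta> s (Tadj A) B)"

definition is_density :: "nat \<Rightarrow> complex mat \<Rightarrow> bool" where
  "is_density d \<sigma> \<longleftrightarrow> \<sigma> \<in> carrier_mat d d \<and> adj \<sigma> = \<sigma> \<and> mtrace \<sigma> = 1 \<and>
     (\<forall>v\<in>carrier_vec d. 0 \<le> Re (conjugate v \<bullet> (\<sigma> *\<^sub>v v)))"

definition unique_fixed_state :: "nat \<Rightarrow> (complex mat \<Rightarrow> complex mat) \<Rightarrow> complex mat \<Rightarrow> bool" where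
  "unique_fixed_state d T \<rho> \<longleftrightarrow> T \<rho> = \<rho> \<and> (\<forall>\<sigma>. is_density d \<sigma> \<and> T \<sigma> = \<sigma> \<longrightarrow> \<sigma> = \<rho>)"

definition spectrum_in_01 :: "nat \<Rightarrow> (complex mat \<Rightarrow> complex mat) \<Rightarrow> bool" where
  "spectrum_in_01 d T \<longleftrightarrow> (\<forall>\<mu> X. X \<in> carrier_mat d d \<and> X \<noteq> 0\<^sub>m d d \<and> T X = \<mu> \<cdot>\<^sub>m X \<longrightarrow>
       \<mu> \<in> \<real> \<and> 0 \<le> Re \<mu> \<and> Re \<mu> \<le> 1)"

definition meas_expect :: "real set \<Rightarrow> (real \<Rightarrow> complex mat) \<Rightarrow> complex mat \<Rightarrow> complex" where
  "meas_expect U Ob \<rho> = (\<Sum>u\<in>U. complex_of_real u * mtrace (Ob u * \<rho> * adj (Ob u)))"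

definition hat_meas_adj :: "nat \<Rightarrow> real set \<Rightarrow> (real \<Rightarrow> complex mat) \<Rightarrow> complex \<Rightarrow> complex mat \<Rightarrow> complex mat" where
  "hat_meas_adj d U Ob v X = msum d U (\<lambda>u. (complex_of_real u - v) \<cdot>\<^sub>m (adj (Ob u) * X * Ob u))"

text \<open>One step of the single-trajectory algorithm with recorded outcome u of the first M:
  X |-> M(N(O_u X O_u^dag)).\<close>
definition traj_step :: "nat \<Rightarrow> real set \<Rightarrow> (real \<Rightarrow> complex mat) \<Rightarrow> 'k set \<Rightarrow> ('k \<Rightarrow> complex mat)
     \<Rightarrow> real \<Rightarrow> complex mat \<Rightarrow> complex mat" where
  "traj_step d U Ob IN KN u X = kraus_map d U Ob (kraus_map d IN KN (Ob u * X * adj (Ob u)))"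

text \<open>Unnormalised post-measurement state after rounds 1..t with outcomes e 1, ..., e t.\<close>
fun traj_state :: "nat \<Rightarrow> real set \<Rightarrow> (real \<Rightarrow> complex mat) \<Rightarrow> 'k set \<Rightarrow> ('k \<Rightarrow> complex mat)
     \<Rightarrow> complex mat \<Rightarrow> (nat \<Rightarrow> real) \<Rightarrow> nat \<Rightarrow> complex mat" where
  "traj_state d U Ob IN KN \<rho>0 e 0 = \<rho>0"
| "traj_state d U Ob IN KN \<rho>0 e (Suc t) = traj_step d U Ob IN KN (e (Suc t)) (traj_state d U Ob IN KN \<rho>0 e t)"

text \<open>Expectation of a function f of the recorded outcomes e 1, ..., e K of the
  single-trajectory algorithm with initial state rho0, Tburn applications of N, K rounds:
  sum over all outcome records of Prob(record) * f(record).\<close>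
definition traj_expect :: "nat \<Rightarrow> real set \<Rightarrow> (real \<Rightarrow> complex mat) \<Rightarrow> 'k set \<Rightarrow> ('k \<Rightarrow> complex mat)
     \<Rightarrow> complex mat \<Rightarrow> nat \<Rightarrow> nat \<Rightarrow> ((nat \<Rightarrow> real) \<Rightarrow> complex) \<Rightarrow> complex" where
  "traj_expect d U Ob IN KN \<rho>0 Tburn K f =
     (\<Sum>e\<in>PiE {1..K} (\<lambda>_. U).
        mtrace (traj_state d U Ob IN KN ((kraus_map d IN KN ^^ Tburn) \<rho>0) e K) * f e)"

end

theory Submission
  imports Defs "Jordan_Normal_Form.Determinant"
begin


lemma mult_entry:
  assumes "A \<in> carrier_mat d d" "B \<in> carrier_mat d d" "i < d" "j < d"
  shows "(A * B) $$ (i,j) = (\<Sum>l<d. A $$ (i,l) * B $$ (l,j))"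
  using assms by (auto simp: scalar_prod_def atLeast0LessThan intro!: sum.cong)

lemma msum_carrier[simp]: "msum d I f \<in> carrier_mat d d"
  and msum_dim[simp]: "dim_row (msum d I f) = d" "dim_col (msum d I f) = d"
  by (auto simp: msum_def)

lemma msum_index[simp]: "i < d \<Longrightarrow> j < d \<Longrightarrow> msum d I f $$ (i,j) = (\<Sum>u\<in>I. f u $$ (i,j))"
  by (simp add: msum_def)

lemma mtrace_carrier: "A \<in> carrier_mat d d \<Longrightarrow> mtrace A = (\<Sum>i<d. A $$ (i,i))"
  by (simp add: mtrace_def)

lemma mtrace_comm:
  assumes "A \<in> carrier_mat d d" "B \<in> carrier_mat d d"
  shows "mtrace (A * B) = mtrace (B * A)"
proof -
  have "mtrace (A * B) = (\<Sum>i<d. \<Sum>l<d. A $$ (i,l) * B $$ (l,i))"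
    using assms by (simp del: index_mult_mat add: mtrace_carrier[of _ d] mult_entry[where d=d])
  also have "\<dots> = (\<Sum>l<d. \<Sum>i<d. B $$ (l,i) * A $$ (i,l))"
    by (subst sum.swap) (simp add: mult.commute)
  also have "\<dots> = mtrace (B * A)"
    using assms by (simp del: index_mult_mat add: mtrace_carrier[of _ d] mult_entry[where d=d])
  finally show ?thesis .
qed

lemma mtrace_msum:
  assumes "\<And>u. u \<in> I \<Longrightarrow> f u \<in> carrier_mat d d"
  shows "mtrace (msum d I f) = (\<Sum>u\<in>I. mtrace (f u))"
proof -
  have "mtrace (msum d I f) = (\<Sum>i<d. \<Sum>u\<in>I. f u $$ (i,i))"
    by (simp add: mtrace_carrier[of _ d])
  also have "\<dots> = (\<Sum>u\<in>I. \<Sum>i<d. f u $$ (i,i))" by (rule sum.swap)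
  also have "\<dots> = (\<Sum>u\<in>I. mtrace (f u))"
    using assms by (intro sum.cong) (auto simp: mtrace_carrier[of _ d])
  finally show ?thesis .
qed

lemma mtrace_smult: "A \<in> carrier_mat d d \<Longrightarrow> mtrace (c \<cdot>\<^sub>m A) = c * mtrace A"
  by (simp add: mtrace_carrier[of _ d] sum_distrib_left)

lemma mult_msum_right:
  assumes "B \<in> carrier_mat d d" "\<And>u. u \<in> I \<Longrightarrow> f u \<in> carrier_mat d d"
  shows "msum d I f * B = msum d I (\<lambda>u. f u * B)"
proof (rule eq_matI)
  fix i j assume ij: "i < dim_row (msum d I (\<lambda>u. f u * B))" "j < dim_col (msum d I (\<lambda>u. f u * B))"
  then have "i < d" "j < d" by auto
  then have "(msum d I f * B) $$ (i,j) = (\<Sum>l<d. (\<Sum>u\<in>I. f u $$ (i,l)) * B $$ (l,j))"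
    using assms by (simp del: index_mult_mat add: mult_entry[where d=d])
  also have "\<dots> = (\<Sum>u\<in>I. \<Sum>l<d. f u $$ (i,l) * B $$ (l,j))"
    by (simp add: sum_distrib_right) (rule sum.swap)
  also have "\<dots> = msum d I (\<lambda>u. f u * B) $$ (i,j)"
    using assms \<open>i<d\<close> \<open>j<d\<close> by (simp del: index_mult_mat add: mult_entry[where d=d])
  finally show "(msum d I f * B) $$ (i,j) = msum d I (\<lambda>u. f u * B) $$ (i,j)" .
qed (use assms in auto)

lemma mult_msum_left:
  assumes "A \<in> carrier_mat d d" "\<And>u. u \<in> I \<Longrightarrow> f u \<in> carrier_mat d d"
  shows "A * msum d I f = msum d I (\<lambda>u. A * f u)"
proof (rule eq_matI)
  fix i j assume ij: "i < dim_row (msum d I (\<lambda>u. A * f u))" "j < dim_col (msum d I (\<lambda>u. A * f u))"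
  then have "i < d" "j < d" by auto
  then have "(A * msum d I f) $$ (i,j) = (\<Sum>l<d. A $$ (i,l) * (\<Sum>u\<in>I. f u $$ (l,j)))"
    using assms by (simp del: index_mult_mat add: mult_entry[where d=d])
  also have "\<dots> = (\<Sum>u\<in>I. \<Sum>l<d. A $$ (i,l) * f u $$ (l,j))"
    by (simp add: sum_distrib_left) (rule sum.swap)
  also have "\<dots> = msum d I (\<lambda>u. A * f u) $$ (i,j)"
    using assms \<open>i<d\<close> \<open>j<d\<close> by (simp del: index_mult_mat add: mult_entry[where d=d])
  finally show "(A * msum d I f) $$ (i,j) = msum d I (\<lambda>u. A * f u) $$ (i,j)" .
qed (use assms in auto)

lemma smult_msum: "(\<And>u. u \<in> I \<Longrightarrow> f u \<in> carrier_mat d d) \<Longrightarrow> c \<cdot>\<^sub>m msum d I f = msum d I (\<lambda>u. c \<cdot>\<^sub>m f u)"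
proof -
  assume a: "\<And>u. u \<in> I \<Longrightarrow> f u \<in> carrier_mat d d"
  then have "\<forall>u\<in>I. dim_row (f u) = d \<and> dim_col (f u) = d" by auto
  then show ?thesis by (intro eq_matI) (auto simp: sum_distrib_left intro!: sum.cong)
qed

lemma msum_swap: "msum d I (\<lambda>u. msum d J (g u)) = msum d J (\<lambda>j. msum d I (\<lambda>u. g u j))"
  by (rule eq_matI) (auto intro: sum.swap)

lemma msum_cong: "(\<And>u. u \<in> I \<Longrightarrow> f u = g u) \<Longrightarrow> msum d I f = msum d I g"
  unfolding msum_def by (intro eq_matI) auto

lemma msum_const: "X \<in> carrier_mat d d \<Longrightarrow> msum d I (\<lambda>u. c u \<cdot>\<^sub>m X) = (\<Sum>u\<in>I. c u) \<cdot>\<^sub>m X"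
  by (rule eq_matI) (auto simp: sum_distrib_right)

lemma adj_carrier[simp]: "A \<in> carrier_mat d d \<Longrightarrow> adj A \<in> carrier_mat d d"
  by (auto simp: adj_def)

lemma adj_one[simp]: "adj (1\<^sub>m d) = 1\<^sub>m d"
  by (rule eq_matI) (auto simp: adj_def)

lemma pow_smult_mat:
  fixes A :: "complex mat"
  assumes "A \<in> carrier_mat d d"
  shows "(c \<cdot>\<^sub>m A) ^\<^sub>m k = c ^ k \<cdot>\<^sub>m (A ^\<^sub>m k)"
proof (induction k)
  case 0 show ?case using assms by (intro eq_matI) auto
next
  case (Suc k)
  have "(c \<cdot>\<^sub>m A) ^\<^sub>m Suc k = (c ^ k \<cdot>\<^sub>m (A ^\<^sub>m k)) * (c \<cdot>\<^sub>m A)" using Suc by simp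
  also have "\<dots> = c ^ Suc k \<cdot>\<^sub>m (A ^\<^sub>m Suc k)"
    using assms by (intro eq_matI) (auto simp: scalar_prod_def sum_distrib_left algebra_simps intro!: sum.cong)
  finally show ?case .
qed

lemma pow_add_mat:
  assumes "A \<in> carrier_mat d d"
  shows "A ^\<^sub>m (m + k) = A ^\<^sub>m m * A ^\<^sub>m k"
proof (induction k)
  case 0 show ?case using assms by simp
next
  case (Suc k)
  have "A ^\<^sub>m (m + Suc k) = (A ^\<^sub>m m * A ^\<^sub>m k) * A" using Suc by simp
  also have "\<dots> = A ^\<^sub>m m * (A ^\<^sub>m k * A)"
    using assms by (intro assoc_mult_mat[of _ d d _ d _ d]) auto
  finally show ?case by simp
qed

definition abssum :: "nat \<Rightarrow> complex mat \<Rightarrow> real" where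
  "abssum d A = (\<Sum>i<d. \<Sum>j<d. cmod (A $$ (i,j)))"

lemma pow_entry_bound:
  assumes A: "A \<in> carrier_mat d d" and "i < d" "j < d"
  shows "cmod ((A ^\<^sub>m k) $$ (i,j)) \<le> abssum d A ^ k"
  using assms(2,3)
proof (induction k arbitrary: i j)
  case 0 then show ?case using A by auto
next
  case (Suc k)
  have "(A ^\<^sub>m Suc k) $$ (i,j) = (\<Sum>l<d. (A ^\<^sub>m k) $$ (i,l) * A $$ (l,j))"
    using A Suc.prems by (simp del: index_mult_mat add: mult_entry[where d=d])
  then have "cmod ((A ^\<^sub>m Suc k) $$ (i,j)) \<le> (\<Sum>l<d. cmod ((A ^\<^sub>m k) $$ (i,l)) * cmod (A $$ (l,j)))"
    by (simp add: norm_mult[symmetric] norm_sum)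
  also have "\<dots> \<le> (\<Sum>l<d. abssum d A ^ k * cmod (A $$ (l,j)))"
    using Suc by (intro sum_mono mult_right_mono) auto
  also have "\<dots> = abssum d A ^ k * (\<Sum>l<d. cmod (A $$ (l,j)))"
    by (simp add: sum_distrib_left)
  also have "(\<Sum>l<d. cmod (A $$ (l,j))) \<le> abssum d A"
  proof -
    have "(\<Sum>l<d. cmod (A $$ (l,j))) \<le> (\<Sum>l<d. \<Sum>j'<d. cmod (A $$ (l,j')))"
      using Suc.prems by (intro sum_mono member_le_sum) auto
    then show ?thesis by (simp add: abssum_def)
  qed
  then have "abssum d A ^ k * (\<Sum>l<d. cmod (A $$ (l,j))) \<le> abssum d A ^ k * abssum d A"
    by (intro mult_left_mono) (auto simp: abssum_def intro!: zero_le_power sum_nonneg)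
  finally show ?case by (simp add: mult.commute)
qed

lemma exp_term_summable:
  assumes A: "A \<in> carrier_mat d d" and "i < d" "j < d"
  shows "summable (\<lambda>k. norm (a ^ k * (A ^\<^sub>m k) $$ (i,j) / fact k :: complex))"
proof (rule summable_comparison_test)
  show "summable (\<lambda>k. inverse (fact k) * (cmod a * abssum d A) ^ k)" by (rule summable_exp)
  show "\<exists>N. \<forall>n\<ge>N. norm (norm (a ^ n * (A ^\<^sub>m n) $$ (i,j) / fact n)) \<le> inverse (fact n) * (cmod a * abssum d A) ^ n"
  proof (intro exI allI impI)
    fix n :: nat
    have "norm (norm (a ^ n * (A ^\<^sub>m n) $$ (i,j) / fact n)) = cmod a ^ n * cmod ((A ^\<^sub>m n) $$ (i,j)) / fact n"
      by (simp add: norm_mult norm_divide norm_power)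
    also have "\<dots> \<le> cmod a ^ n * abssum d A ^ n / fact n"
      using pow_entry_bound[OF assms] by (intro divide_right_mono mult_left_mono) auto
    also have "\<dots> = inverse (fact n) * (cmod a * abssum d A) ^ n"
      by (simp add: power_mult_distrib divide_inverse mult_ac)
    finally show "norm (norm (a ^ n * (A ^\<^sub>m n) $$ (i,j) / fact n)) \<le> inverse (fact n) * (cmod a * abssum d A) ^ n" .
  qed
qed

lemma mexp_carrier: "A \<in> carrier_mat d d \<Longrightarrow> mexp A \<in> carrier_mat d d"
  unfolding mexp_def carrier_mat_def by simp

lemma mexp_entry:
  assumes A: "A \<in> carrier_mat d d" and ij: "i < d" "j < d"
  shows "mexp (a \<cdot>\<^sub>m A) $$ (i,j) = (\<Sum>k. a ^ k * (A ^\<^sub>m k) $$ (i,j) / fact k)"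
proof -
  have "mexp (a \<cdot>\<^sub>m A) $$ (i,j) = (\<Sum>k. ((a \<cdot>\<^sub>m A) ^\<^sub>m k) $$ (i,j) / of_nat (fact k))"
    unfolding mexp_def using A ij by (subst index_mat) auto
  also have "\<dots> = (\<Sum>k. a ^ k * (A ^\<^sub>m k) $$ (i,j) / fact k)"
  proof (rule suminf_cong)
    fix k
    have "((a \<cdot>\<^sub>m A) ^\<^sub>m k) $$ (i,j) = a ^ k * (A ^\<^sub>m k) $$ (i,j)"
      unfolding pow_smult_mat[OF A] using A ij by (subst index_smult_mat) auto
    then show "((a \<cdot>\<^sub>m A) ^\<^sub>m k) $$ (i,j) / of_nat (fact k) = a ^ k * (A ^\<^sub>m k) $$ (i,j) / fact k"
      by (simp only: of_nat_fact)
  qed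
  finally show ?thesis .
qed

lemma binom_fact_sum:
  "(\<Sum>k\<le>n. a ^ k * b ^ (n - k) / (fact k * fact (n - k))) = (a + b) ^ n / (fact n :: complex)"
proof -
  have "(a + b) ^ n / fact n = (\<Sum>k\<le>n. of_nat (n choose k) * a ^ k * b ^ (n - k) / fact n)"
    by (simp add: binomial_ring sum_divide_distrib)
  also have "\<dots> = (\<Sum>k\<le>n. a ^ k * b ^ (n - k) / (fact k * fact (n - k)))"
  proof (intro sum.cong refl)
    fix k assume "k \<in> {..n}"
    then have kn: "k \<le> n" by simp
    have fn: "(fact n :: complex) \<noteq> 0" "(fact k :: complex) \<noteq> 0" "(fact (n - k) :: complex) \<noteq> 0" by auto
    have "of_nat (n choose k) / (fact n :: complex) = 1 / (fact k * fact (n - k))"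
      using binomial_fact[OF kn, where 'a=complex] fn by simp
    then show "of_nat (n choose k) * a ^ k * b ^ (n - k) / fact n = a ^ k * b ^ (n - k) / (fact k * fact (n - k))"
      by (metis (no_types, lifting) mult.commute times_divide_eq_left times_divide_eq_right mult.left_commute divide_divide_eq_left mult_1_right)
  qed
  finally show ?thesis by simp
qed

lemma mexp_add:
  assumes A: "A \<in> carrier_mat d d"
  shows "mexp (a \<cdot>\<^sub>m A) * mexp (b \<cdot>\<^sub>m A) = mexp ((a + b) \<cdot>\<^sub>m A)"
proof (rule eq_matI)
  fix i j assume "i < dim_row (mexp ((a + b) \<cdot>\<^sub>m A))" "j < dim_col (mexp ((a + b) \<cdot>\<^sub>m A))"
  then have ij: "i < d" "j < d" using A by (auto simp: mexp_def)
  define f where "f = (\<lambda>l k. a ^ k * (A ^\<^sub>m k) $$ (i,l) / fact k :: complex)"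
  define g where "g = (\<lambda>l k. b ^ k * (A ^\<^sub>m k) $$ (l,j) / fact k :: complex)"
  define c where "c = (\<lambda>l n. \<Sum>k\<le>n. f l k * g l (n - k))"
  have cs: "c l sums ((\<Sum>k. f l k) * (\<Sum>k. g l k))" if "l < d" for l
    unfolding c_def f_def g_def using that ij
    by (intro Cauchy_product_sums exp_term_summable[OF A]) auto
  have "(mexp (a \<cdot>\<^sub>m A) * mexp (b \<cdot>\<^sub>m A)) $$ (i,j) = (\<Sum>l<d. (\<Sum>k. f l k) * (\<Sum>k. g l k))"
    using ij A by (simp del: index_mult_mat add: mult_entry[where d=d] mexp_carrier mexp_entry[OF A] f_def g_def)
  also have "\<dots> = (\<Sum>l<d. \<Sum>n. c l n)"
    using cs by (intro sum.cong refl) (simp add: sums_unique)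
  also have "\<dots> = (\<Sum>n. \<Sum>l<d. c l n)"
    by (intro suminf_sum[symmetric]) (use cs sums_summable in blast)
  also have "\<dots> = (\<Sum>n. (a + b) ^ n * (A ^\<^sub>m n) $$ (i,j) / fact n)"
  proof (intro suminf_cong)
    fix n
    have "(\<Sum>l<d. c l n) = (\<Sum>k\<le>n. a ^ k * b ^ (n - k) / (fact k * fact (n - k)) *
             (\<Sum>l<d. (A ^\<^sub>m k) $$ (i,l) * (A ^\<^sub>m (n - k)) $$ (l,j)))"
      unfolding c_def f_def g_def
      by (subst sum.swap) (simp add: sum_distrib_left divide_inverse inverse_mult_distrib mult_ac)
    also have "\<dots> = (\<Sum>k\<le>n. a ^ k * b ^ (n - k) / (fact k * fact (n - k)) * (A ^\<^sub>m n) $$ (i,j))"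
    proof (intro sum.cong refl)
      fix k assume "k \<in> {..n}"
      then have "A ^\<^sub>m n = A ^\<^sub>m k * A ^\<^sub>m (n - k)" using pow_add_mat[OF A, of k "n - k"] by simp
      then have "(A ^\<^sub>m n) $$ (i,j) = (\<Sum>l<d. (A ^\<^sub>m k) $$ (i,l) * (A ^\<^sub>m (n - k)) $$ (l,j))"
        using A ij by (simp del: index_mult_mat add: mult_entry[where d=d])
      then show "a ^ k * b ^ (n - k) / (fact k * fact (n - k)) * (\<Sum>l<d. (A ^\<^sub>m k) $$ (i,l) * (A ^\<^sub>m (n - k)) $$ (l,j))
          = a ^ k * b ^ (n - k) / (fact k * fact (n - k)) * (A ^\<^sub>m n) $$ (i,j)" by simp
    qed
    also have "\<dots> = (\<Sum>k\<le>n. a ^ k * b ^ (n - k) / (fact k * fact (n - k))) * (A ^\<^sub>m n) $$ (i,j)"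
      by (rule sum_distrib_right[symmetric])
    also have "\<dots> = (a + b) ^ n * (A ^\<^sub>m n) $$ (i,j) / fact n"
      unfolding binom_fact_sum by simp
    finally show "(\<Sum>l<d. c l n) = (a + b) ^ n * (A ^\<^sub>m n) $$ (i,j) / fact n" .
  qed
  also have "\<dots> = mexp ((a + b) \<cdot>\<^sub>m A) $$ (i,j)"
    using mexp_entry[OF A ij] by simp
  finally show "(mexp (a \<cdot>\<^sub>m A) * mexp (b \<cdot>\<^sub>m A)) $$ (i,j) = mexp ((a + b) \<cdot>\<^sub>m A) $$ (i,j)" .
qed (use A in \<open>auto simp: mexp_def\<close>)





lemma smult_smult_mat': "a \<cdot>\<^sub>m (b \<cdot>\<^sub>m A) = (a * b) \<cdot>\<^sub>m (A :: complex mat)"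
  by (rule eq_matI) auto

lemma smult_mult_smult:
  assumes "A \<in> carrier_mat n n" "B \<in> carrier_mat n n"
  shows "(a \<cdot>\<^sub>m A) * (b \<cdot>\<^sub>m B) = (a * b) \<cdot>\<^sub>m (A * (B :: complex mat))"
proof -
  have "(a \<cdot>\<^sub>m A) * (b \<cdot>\<^sub>m B) = a \<cdot>\<^sub>m (A * (b \<cdot>\<^sub>m B))"
    using assms by (intro mult_smult_assoc_mat) auto
  also have "A * (b \<cdot>\<^sub>m B) = b \<cdot>\<^sub>m (A * B)"
    using assms by (intro mult_smult_distrib) auto
  finally show ?thesis by (simp add: smult_smult_mat')
qed

lemma gibbs_pow_carrier: "H \<in> carrier_mat d d \<Longrightarrow> gibbs_pow H \<beta> r \<in> carrier_mat d d"
  unfolding gibbs_pow_def by (auto intro!: smult_carrier_mat mexp_carrier)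

lemma gibbs_carrier: "H \<in> carrier_mat d d \<Longrightarrow> gibbs H \<beta> \<in> carrier_mat d d"
  unfolding gibbs_def by (auto intro!: smult_carrier_mat mexp_carrier)

lemma gibbs_pow_mult:
  assumes H: "H \<in> carrier_mat d d"
  shows "gibbs_pow H \<beta> x * gibbs_pow H \<beta> y =
     complex_of_real (1 / (partfun H \<beta> powr x) * (1 / (partfun H \<beta> powr y))) \<cdot>\<^sub>m
        mexp ((- complex_of_real \<beta> * complex_of_real (x + y)) \<cdot>\<^sub>m H)"
proof -
  let ?a = "- complex_of_real (x * \<beta>)" and ?b = "- complex_of_real (y * \<beta>)"
  have c1: "mexp (?a \<cdot>\<^sub>m H) \<in> carrier_mat d d" "mexp (?b \<cdot>\<^sub>m H) \<in> carrier_mat d d"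
    using H by (auto intro!: smult_carrier_mat mexp_carrier)
  have "gibbs_pow H \<beta> x * gibbs_pow H \<beta> y =
     complex_of_real (1 / (partfun H \<beta> powr x) * (1 / (partfun H \<beta> powr y))) \<cdot>\<^sub>m
        (mexp (?a \<cdot>\<^sub>m H) * mexp (?b \<cdot>\<^sub>m H))"
    unfolding gibbs_pow_def by (subst smult_mult_smult[OF c1]) simp
  also have "mexp (?a \<cdot>\<^sub>m H) * mexp (?b \<cdot>\<^sub>m H) = mexp ((?a + ?b) \<cdot>\<^sub>m H)"
    by (rule mexp_add[OF H])
  also have "?a + ?b = - complex_of_real \<beta> * complex_of_real (x + y)"
    by (simp add: algebra_simps)
  finally show ?thesis .
qed

lemma gibbs_split:
  assumes H: "H \<in> carrier_mat d d"
    and norm: "mtrace (gibbs_pow H \<beta> (1 - s) * gibbs_pow H \<beta> s) = 1"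
  shows "gibbs_pow H \<beta> s * gibbs_pow H \<beta> (1 - s) = gibbs H \<beta>"
proof -
  define Z where "Z = partfun H \<beta>"
  define T where "T = mtrace (mexp ((- complex_of_real \<beta>) \<cdot>\<^sub>m H))"
  define q where "q = 1 / (Z powr (1 - s)) * (1 / (Z powr s))"
  have Ee: "- complex_of_real \<beta> * complex_of_real 1 = - complex_of_real \<beta>" by simp
  have m1: "gibbs_pow H \<beta> (1 - s) * gibbs_pow H \<beta> s = complex_of_real q \<cdot>\<^sub>m mexp ((- complex_of_real \<beta>) \<cdot>\<^sub>m H)"
    using gibbs_pow_mult[OF H, of \<beta> "1 - s" s] unfolding q_def Z_def by simp
  have m2: "gibbs_pow H \<beta> s * gibbs_pow H \<beta> (1 - s) = complex_of_real (1 / (Z powr s) * (1 / (Z powr (1 - s)))) \<cdot>\<^sub>m mexp ((- complex_of_real \<beta>) \<cdot>\<^sub>m H)"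
    using gibbs_pow_mult[OF H, of \<beta> s "1 - s"] unfolding Z_def by simp
  have "complex_of_real q * T = 1"
    using norm unfolding m1 T_def using mtrace_smult[OF mexp_carrier, of _ d] H by auto
  then have q0: "q \<noteq> 0" by auto
  then have qT: "T = complex_of_real (1 / q)"
    using \<open>complex_of_real q * T = 1\<close> by (simp add: field_simps)
  then have ZT: "Z = 1 / q" unfolding Z_def partfun_def T_def[symmetric] by simp
  have Zpos: "Z > 0"
  proof (rule ccontr)
    assume "\<not> Z > 0"
    then consider "Z = 0" | "Z < 0" by linarith
    then show False
    proof cases
      case 1 then show False using q0 unfolding q_def by simp
    next
      case 2
      then have "q > 0" unfolding q_def powr_def by simp
      then show False using ZT 2 by simp
    qed
  qed
  have "Z powr s * Z powr (1 - s) = Z" using Zpos by (simp add: powr_add[symmetric])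
  then have "1 / (Z powr s) * (1 / (Z powr (1 - s))) = 1 / Z" by simp
  moreover have "complex_of_real (1 / Z) = 1 / T" using qT ZT by simp
  ultimately show ?thesis unfolding m2 gibbs_def T_def by simp
qed




lemma one_smult_mat': "1 \<cdot>\<^sub>m A = (A :: complex mat)"
  by (rule eq_matI) auto

lemma mult_carrier_sq[simp]: "A \<in> carrier_mat d d \<Longrightarrow> B \<in> carrier_mat d d \<Longrightarrow> A * B \<in> carrier_mat d d"
  by auto

lemma smult_carrier_sq[simp]: "A \<in> carrier_mat d d \<Longrightarrow> c \<cdot>\<^sub>m A \<in> carrier_mat d d"
  by auto

definition wadj :: "nat \<Rightarrow> 'i set \<Rightarrow> ('i \<Rightarrow> complex mat) \<Rightarrow> ('i \<Rightarrow> complex) \<Rightarrow> complex mat \<Rightarrow> complex mat" where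
  "wadj d I K w X = msum d I (\<lambda>u. w u \<cdot>\<^sub>m (adj (K u) * X * K u))"

lemma kraus_adj_wadj: "kraus_adj d I K X = wadj d I K (\<lambda>_. 1) X"
  unfolding kraus_adj_def wadj_def by (simp add: one_smult_mat')

lemma hat_meas_adj_wadj: "hat_meas_adj d U Ob v X = wadj d U Ob (\<lambda>u. complex_of_real u - v) X"
  unfolding hat_meas_adj_def wadj_def by simp

definition linmap :: "nat \<Rightarrow> (complex mat \<Rightarrow> complex mat) \<Rightarrow> bool" where
  "linmap d L \<longleftrightarrow> (\<forall>X\<in>carrier_mat d d. L X \<in> carrier_mat d d) \<and>
     (\<forall>X\<in>carrier_mat d d. \<forall>c. L (c \<cdot>\<^sub>m X) = c \<cdot>\<^sub>m L X) \<and>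
     (\<forall>(J::nat set) g. (\<forall>j\<in>J. g j \<in> carrier_mat d d) \<longrightarrow> L (msum d J g) = msum d J (\<lambda>j. L (g j)))"

lemma sandwich_carrier:
  "A \<in> carrier_mat d d \<Longrightarrow> X \<in> carrier_mat d d \<Longrightarrow> B \<in> carrier_mat d d \<Longrightarrow> A * X * B \<in> carrier_mat d d"
  by auto

lemma sandwich_smult:
  fixes A X B :: "complex mat"
  assumes "A \<in> carrier_mat d d" "X \<in> carrier_mat d d" "B \<in> carrier_mat d d"
  shows "A * (c \<cdot>\<^sub>m X) * B = c \<cdot>\<^sub>m (A * X * B)"
proof -
  have "A * (c \<cdot>\<^sub>m X) = c \<cdot>\<^sub>m (A * X)" using assms by (intro mult_smult_distrib) auto
  moreover have "(c \<cdot>\<^sub>m (A * X)) * B = c \<cdot>\<^sub>m (A * X * B)" using assms by (intro mult_smult_assoc_mat) auto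
  ultimately show ?thesis by simp
qed

lemma sandwich_msum:
  assumes "A \<in> carrier_mat d d" "B \<in> carrier_mat d d" "\<And>j. j \<in> J \<Longrightarrow> g j \<in> carrier_mat d d"
  shows "A * msum d J g * B = msum d J (\<lambda>j. A * g j * B)"
proof -
  have "A * msum d J g = msum d J (\<lambda>j. A * g j)" using assms by (intro mult_msum_left) auto
  moreover have "msum d J (\<lambda>j. A * g j) * B = msum d J (\<lambda>j. A * g j * B)"
    using assms by (intro mult_msum_right) auto
  ultimately show ?thesis by simp
qed

lemma linmap_wadj:
  assumes K: "\<And>u. u \<in> I \<Longrightarrow> K u \<in> carrier_mat d d"
  shows "linmap d (wadj d I K w)"
  unfolding linmap_def
proof (intro conjI ballI allI impI)
  fix X :: "complex mat" assume "X \<in> carrier_mat d d"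
  show "wadj d I K w X \<in> carrier_mat d d" by (simp add: wadj_def)
next
  fix X :: "complex mat" and c assume X: "X \<in> carrier_mat d d"
  have "wadj d I K w (c \<cdot>\<^sub>m X) = msum d I (\<lambda>u. c \<cdot>\<^sub>m (w u \<cdot>\<^sub>m (adj (K u) * X * K u)))"
    unfolding wadj_def using K X
    by (intro msum_cong) (simp add: sandwich_smult[of _ d] smult_smult_mat' mult.commute)
  also have "\<dots> = c \<cdot>\<^sub>m wadj d I K w X"
    unfolding wadj_def using K X by (intro smult_msum[symmetric]) auto
  finally show "wadj d I K w (c \<cdot>\<^sub>m X) = c \<cdot>\<^sub>m wadj d I K w X" .
next
  fix J :: "nat set" and g :: "nat \<Rightarrow> complex mat" assume g: "\<forall>j\<in>J. g j \<in> carrier_mat d d"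
  have "wadj d I K w (msum d J g) = msum d I (\<lambda>u. msum d J (\<lambda>j. w u \<cdot>\<^sub>m (adj (K u) * g j * K u)))"
    unfolding wadj_def
  proof (intro msum_cong)
    fix u assume u: "u \<in> I"
    have "adj (K u) * msum d J g * K u = msum d J (\<lambda>j. adj (K u) * g j * K u)"
      using K[OF u] g by (intro sandwich_msum) auto
    then show "w u \<cdot>\<^sub>m (adj (K u) * msum d J g * K u) = msum d J (\<lambda>j. w u \<cdot>\<^sub>m (adj (K u) * g j * K u))"
      using K[OF u] g by (simp add: smult_msum)
  qed
  also have "\<dots> = msum d J (\<lambda>j. wadj d I K w (g j))"
    unfolding wadj_def by (rule msum_swap)
  finally show "wadj d I K w (msum d J g) = msum d J (\<lambda>j. wadj d I K w (g j))" .
qed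

lemma linmap_D:
  assumes "linmap d L"
  shows "\<And>X. X \<in> carrier_mat d d \<Longrightarrow> L X \<in> carrier_mat d d"
    and "\<And>X c. X \<in> carrier_mat d d \<Longrightarrow> L (c \<cdot>\<^sub>m X) = c \<cdot>\<^sub>m L X"
    and "\<And>(J::nat set) g. (\<forall>j\<in>J. g j \<in> carrier_mat d d) \<Longrightarrow> L (msum d J g) = msum d J (\<lambda>j. L (g j))"
proof -
  have abc: "(\<forall>X\<in>carrier_mat d d. L X \<in> carrier_mat d d) \<and>
    (\<forall>X\<in>carrier_mat d d. \<forall>c. L (c \<cdot>\<^sub>m X) = c \<cdot>\<^sub>m L X) \<and>
    (\<forall>(J::nat set) g. (\<forall>j\<in>J. g j \<in> carrier_mat d d) \<longrightarrow> L (msum d J g) = msum d J (\<lambda>j. L (g j)))"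
    using assms unfolding linmap_def .
  note a = conjunct1[OF abc] and b = conjunct1[OF conjunct2[OF abc]] and c = conjunct2[OF conjunct2[OF abc]]
  show "\<And>X. X \<in> carrier_mat d d \<Longrightarrow> L X \<in> carrier_mat d d" using a by (rule bspec)
  show "\<And>X c. X \<in> carrier_mat d d \<Longrightarrow> L (c \<cdot>\<^sub>m X) = c \<cdot>\<^sub>m L X" by (rule b[rule_format])
  show "\<And>(J::nat set) g. (\<forall>j\<in>J. g j \<in> carrier_mat d d) \<Longrightarrow> L (msum d J g) = msum d J (\<lambda>j. L (g j))"
    using c by blast
qed

lemma linmap_comp:
  assumes L1: "linmap d L1" and L2: "linmap d L2"
  shows "linmap d (\<lambda>X. L1 (L2 X))"
  unfolding linmap_def
proof (intro conjI ballI allI impI)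
  fix X :: "complex mat" assume X: "X \<in> carrier_mat d d"
  show "L1 (L2 X) \<in> carrier_mat d d" by (intro linmap_D(1)[OF L1] linmap_D(1)[OF L2] X)
  fix c
  have "L2 (c \<cdot>\<^sub>m X) = c \<cdot>\<^sub>m L2 X" by (rule linmap_D(2)[OF L2 X])
  moreover have "L1 (c \<cdot>\<^sub>m L2 X) = c \<cdot>\<^sub>m L1 (L2 X)" by (rule linmap_D(2)[OF L1 linmap_D(1)[OF L2 X]])
  ultimately show "L1 (L2 (c \<cdot>\<^sub>m X)) = c \<cdot>\<^sub>m L1 (L2 X)" by simp
next
  fix J :: "nat set" and g :: "nat \<Rightarrow> complex mat" assume g: "\<forall>j\<in>J. g j \<in> carrier_mat d d"
  have "L2 (msum d J g) = msum d J (\<lambda>j. L2 (g j))" by (rule linmap_D(3)[OF L2 g])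
  moreover have "L1 (msum d J (\<lambda>j. L2 (g j))) = msum d J (\<lambda>j. L1 (L2 (g j)))"
    by (rule linmap_D(3)[OF L1]) (use g linmap_D(1)[OF L2] in blast)
  ultimately show "L1 (L2 (msum d J g)) = msum d J (\<lambda>j. L1 (L2 (g j)))" by simp
qed

lemma linmap_id: "linmap d (\<lambda>X. X)"
  unfolding linmap_def by simp

lemma linmap_funpow:
  assumes "linmap d L"
  shows "linmap d (L ^^ m)"
proof (induction m)
  case 0 then show ?case using linmap_id by (simp add: id_def)
next
  case (Suc m)
  have "linmap d (\<lambda>X. L ((L ^^ m) X))" using linmap_comp[OF assms Suc] .
  then show ?case by (simp add: comp_def)
qed

lemma linmap_eigen_pow:
  fixes J :: "nat set"
  assumes L: "linmap d L"
    and Y: "\<And>j. j \<in> J \<Longrightarrow> Y j \<in> carrier_mat d d"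
    and eig: "\<And>j. j \<in> J \<Longrightarrow> L (Y j) = lam j \<cdot>\<^sub>m Y j"
  shows "(L ^^ m) (msum d J (\<lambda>j. c j \<cdot>\<^sub>m Y j)) = msum d J (\<lambda>j. (c j * lam j ^ m) \<cdot>\<^sub>m Y j)"
proof (induction m)
  case 0 then show ?case by simp
next
  case (Suc m)
  have "(L ^^ Suc m) (msum d J (\<lambda>j. c j \<cdot>\<^sub>m Y j)) = L (msum d J (\<lambda>j. (c j * lam j ^ m) \<cdot>\<^sub>m Y j))"
    using Suc by simp
  also have "\<dots> = msum d J (\<lambda>j. L ((c j * lam j ^ m) \<cdot>\<^sub>m Y j))"
  proof -
    show ?thesis by (rule linmap_D(3)[OF L]) (use Y in auto)
  qed
  also have "\<dots> = msum d J (\<lambda>j. (c j * lam j ^ Suc m) \<cdot>\<^sub>m Y j)"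
  proof (intro msum_cong)
    fix j assume j: "j \<in> J"
    have "L ((c j * lam j ^ m) \<cdot>\<^sub>m Y j) = (c j * lam j ^ m) \<cdot>\<^sub>m L (Y j)"
      by (rule linmap_D(2)[OF L Y[OF j]])
    then show "L ((c j * lam j ^ m) \<cdot>\<^sub>m Y j) = (c j * lam j ^ Suc m) \<cdot>\<^sub>m Y j"
      using eig[OF j] by (simp add: smult_smult_mat' mult_ac)
  qed
  finally show ?case .
qed

lemma assoc3:
  "A \<in> carrier_mat d d \<Longrightarrow> B \<in> carrier_mat d d \<Longrightarrow> C \<in> carrier_mat d d \<Longrightarrow> A * B * C = A * (B * (C :: complex mat))"
  by (rule assoc_mult_mat[of A d d B d C d])

lemma mtrace_sandwich:
  assumes "Q \<in> carrier_mat d d" "X \<in> carrier_mat d d" "C \<in> carrier_mat d d" "P \<in> carrier_mat d d"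
  shows "mtrace (Q * X * P * C) = mtrace (X * (P * C * Q))"
proof -
  have QX: "Q * X \<in> carrier_mat d d" and XP: "X * P \<in> carrier_mat d d" and PC: "P * C \<in> carrier_mat d d"
    and XPC: "X * P * C \<in> carrier_mat d d" and PCQ: "P * C * Q \<in> carrier_mat d d"
    using assms by auto
  have e1: "Q * X * P * C = Q * (X * P * C)"
    using assoc3[OF QX assms(4,3)] assoc3[OF assms(1,2) PC] assoc3[OF assms(2,4,3)] by simp
  have e2: "mtrace (Q * (X * P * C)) = mtrace ((X * P * C) * Q)"
    by (rule mtrace_comm[OF assms(1) XPC])
  have e3: "(X * P * C) * Q = X * (P * C * Q)"
    using assoc3[OF XP assms(3,1)] assoc3[OF assms(2) PC assms(1)] assoc3[OF assms(2,4,3)] assoc3[OF assms(4,3,1)]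
    by simp
  show ?thesis using e1 e2 e3 by simp
qed

lemma kraus_dual:
  assumes K: "\<And>u. u \<in> I \<Longrightarrow> K u \<in> carrier_mat d d" and X: "X \<in> carrier_mat d d" and B: "B \<in> carrier_mat d d"
  shows "mtrace (kraus_map d I K X * B) = mtrace (X * kraus_adj d I K B)"
proof -
  have "kraus_map d I K X * B = msum d I (\<lambda>u. K u * X * adj (K u) * B)"
    unfolding kraus_map_def by (rule mult_msum_right) (use K X B in auto)
  moreover have "mtrace (msum d I (\<lambda>u. K u * X * adj (K u) * B)) = (\<Sum>u\<in>I. mtrace (K u * X * adj (K u) * B))"
    by (rule mtrace_msum) (use K X B in auto)
  ultimately have "mtrace (kraus_map d I K X * B) = (\<Sum>u\<in>I. mtrace (K u * X * adj (K u) * B))"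
    by simp
  also have "\<dots> = (\<Sum>u\<in>I. mtrace (X * (adj (K u) * B * K u)))"
    by (intro sum.cong refl mtrace_sandwich) (use K X B in auto)
  also have "\<dots> = mtrace (msum d I (\<lambda>u. X * (adj (K u) * B * K u)))"
    by (rule mtrace_msum[symmetric]) (use K X B in auto)
  also have "msum d I (\<lambda>u. X * (adj (K u) * B * K u)) = X * kraus_adj d I K B"
    unfolding kraus_adj_def by (rule mult_msum_left[symmetric]) (use K X B in auto)
  finally show ?thesis .
qed




definition Psi :: "nat \<Rightarrow> real set \<Rightarrow> (real \<Rightarrow> complex mat) \<Rightarrow> 'k set \<Rightarrow> ('k \<Rightarrow> complex mat)
    \<Rightarrow> (real \<Rightarrow> complex) \<Rightarrow> complex mat \<Rightarrow> complex mat" where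
  "Psi d U Ob IN KN w B = wadj d U Ob w (kraus_adj d IN KN (kraus_adj d U Ob B))"

fun chain :: "nat \<Rightarrow> real set \<Rightarrow> (real \<Rightarrow> complex mat) \<Rightarrow> 'k set \<Rightarrow> ('k \<Rightarrow> complex mat)
    \<Rightarrow> (nat \<Rightarrow> real \<Rightarrow> complex) \<Rightarrow> nat \<Rightarrow> complex mat \<Rightarrow> complex mat" where
  "chain d U Ob IN KN w 0 B = B"
| "chain d U Ob IN KN w (Suc K) B = chain d U Ob IN KN w K (Psi d U Ob IN KN (w (Suc K)) B)"

lemma traj_state_cong:
  "(\<And>k. 1 \<le> k \<Longrightarrow> k \<le> K \<Longrightarrow> e k = e' k) \<Longrightarrow>
    traj_state d U Ob IN KN \<rho>0 e K = traj_state d U Ob IN KN \<rho>0 e' K"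
  by (induction K) auto

lemma traj_state_carrier:
  "\<rho>0 \<in> carrier_mat d d \<Longrightarrow> traj_state d U Ob IN KN \<rho>0 e K \<in> carrier_mat d d"
  by (cases K) (auto simp: traj_step_def kraus_map_def)

lemma mtrace_mult_smult:
  "X \<in> carrier_mat d d \<Longrightarrow> M \<in> carrier_mat d d \<Longrightarrow> mtrace (X * (c \<cdot>\<^sub>m M)) = c * mtrace (X * M)"
  by (simp add: mult_smult_distrib[of X d d M d] mtrace_smult[of "X * M" d])

context
  fixes d :: nat and U :: "real set" and Ob :: "real \<Rightarrow> complex mat" and IN :: "'k set" and KN :: "'k \<Rightarrow> complex mat"
  assumes Ob: "\<And>u. u \<in> U \<Longrightarrow> Ob u \<in> carrier_mat d d"
    and KN: "\<And>k. k \<in> IN \<Longrightarrow> KN k \<in> carrier_mat d d"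
    and finU: "finite U"
begin

lemma step_dual:
  assumes u: "u \<in> U" and X: "X \<in> carrier_mat d d" and B: "B \<in> carrier_mat d d"
  shows "mtrace (traj_step d U Ob IN KN u X * B) =
         mtrace (X * (adj (Ob u) * kraus_adj d IN KN (kraus_adj d U Ob B) * Ob u))"
proof -
  let ?Z = "Ob u * X * adj (Ob u)"
  have Z: "?Z \<in> carrier_mat d d" using Ob[OF u] X by simp
  have "mtrace (traj_step d U Ob IN KN u X * B) = mtrace (kraus_map d IN KN ?Z * kraus_adj d U Ob B)"
    unfolding traj_step_def by (rule kraus_dual) (use Ob B in \<open>auto simp: kraus_map_def\<close>)
  also have "\<dots> = mtrace (?Z * kraus_adj d IN KN (kraus_adj d U Ob B))"
    by (rule kraus_dual) (use KN Z in \<open>auto simp: kraus_adj_def\<close>)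
  also have "\<dots> = mtrace (X * (adj (Ob u) * kraus_adj d IN KN (kraus_adj d U Ob B) * Ob u))"
    by (rule mtrace_sandwich) (use Ob[OF u] X in \<open>auto simp: kraus_adj_def\<close>)
  finally show ?thesis .
qed

lemma psi_trace:
  assumes X: "X \<in> carrier_mat d d" and B: "B \<in> carrier_mat d d"
  shows "(\<Sum>y\<in>U. w y * mtrace (X * (adj (Ob y) * kraus_adj d IN KN (kraus_adj d U Ob B) * Ob y)))
         = mtrace (X * Psi d U Ob IN KN w B)"
proof -
  let ?Y = "kraus_adj d IN KN (kraus_adj d U Ob B)"
  have Y: "?Y \<in> carrier_mat d d" by (simp add: kraus_adj_def)
  have "X * Psi d U Ob IN KN w B = msum d U (\<lambda>y. X * (w y \<cdot>\<^sub>m (adj (Ob y) * ?Y * Ob y)))"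
    unfolding Psi_def wadj_def by (rule mult_msum_left) (use X Y Ob in auto)
  then have "mtrace (X * Psi d U Ob IN KN w B) = (\<Sum>y\<in>U. mtrace (X * (w y \<cdot>\<^sub>m (adj (Ob y) * ?Y * Ob y))))"
    using mtrace_msum[of U "\<lambda>y. X * (w y \<cdot>\<^sub>m (adj (Ob y) * ?Y * Ob y))" d] X Y Ob by simp
  also have "\<dots> = (\<Sum>y\<in>U. w y * mtrace (X * (adj (Ob y) * ?Y * Ob y)))"
    by (intro sum.cong refl mtrace_mult_smult) (use X Y Ob in auto)
  finally show ?thesis by simp
qed

lemma traj_sum:
  fixes w :: "nat \<Rightarrow> real \<Rightarrow> complex"
  assumes r0: "\<rho>0 \<in> carrier_mat d d"
  shows "B \<in> carrier_mat d d \<Longrightarrow>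
    (\<Sum>e\<in>PiE {1..K} (\<lambda>_. U). (\<Prod>k\<in>{1..K}. w k (e k)) * mtrace (traj_state d U Ob IN KN \<rho>0 e K * B))
    = mtrace (\<rho>0 * chain d U Ob IN KN w K B)"
proof (induction K arbitrary: B)
  case 0
  then show ?case by simp
next
  case (Suc K)
  note B = Suc.prems
  define S where "S = {1..K}"
  define x where "x = Suc K"
  have ins: "{1..Suc K} = insert x S" and xS: "x \<notin> S" and finS: "finite S"
    unfolding S_def x_def by auto
  define F where "F = (\<lambda>e. (\<Prod>k\<in>{1..Suc K}. w k (e k)) * mtrace (traj_state d U Ob IN KN \<rho>0 e (Suc K) * B))"
  define Xg where "Xg = (\<lambda>g. traj_state d U Ob IN KN \<rho>0 g K)"
  define Phi where "Phi = (\<lambda>y. adj (Ob y) * kraus_adj d IN KN (kraus_adj d U Ob B) * Ob y)"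
  have Xc: "\<And>g. Xg g \<in> carrier_mat d d" unfolding Xg_def by (rule traj_state_carrier[OF r0])
  have "(\<Sum>e\<in>PiE {1..Suc K} (\<lambda>_. U). F e) = (\<Sum>e\<in>PiE (insert x S) (\<lambda>_. U). F e)"
    by (simp only: ins)
  also have "\<dots> = (\<Sum>(y,g)\<in>U \<times> PiE S (\<lambda>_. U). F (g(x := y)))"
    using xS by (intro sum.reindex_bij_witness[of _ "\<lambda>(y,g). g(x := y)" "\<lambda>g. (g x, g(x := undefined))"])
       (auto simp: PiE_def extensional_def)
  also have "\<dots> = (\<Sum>(y,g)\<in>U \<times> PiE S (\<lambda>_. U). (\<Prod>k\<in>S. w k (g k)) * (w x y * mtrace (Xg g * Phi y)))"
  proof (intro sum.cong refl, clarify)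
    fix y g assume y: "y \<in> U" and g: "g \<in> PiE S (\<lambda>_. U)"
    have pr: "(\<Prod>k\<in>{1..Suc K}. w k ((g(x := y)) k)) = w x y * (\<Prod>k\<in>S. w k (g k))"
    proof -
      have "(\<Prod>k\<in>{1..Suc K}. w k ((g(x := y)) k)) = w x y * (\<Prod>k\<in>S. w k ((g(x := y)) k))"
        unfolding ins using xS finS by simp
      also have "(\<Prod>k\<in>S. w k ((g(x := y)) k)) = (\<Prod>k\<in>S. w k (g k))"
        using xS by (intro prod.cong) auto
      finally show ?thesis .
    qed
    have ts: "traj_state d U Ob IN KN \<rho>0 (g(x := y)) (Suc K) = traj_step d U Ob IN KN y (Xg g)"
    proof -
      have "traj_state d U Ob IN KN \<rho>0 (g(x := y)) K = Xg g"
        unfolding Xg_def by (rule traj_state_cong) (auto simp: x_def)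
      then show ?thesis by (simp add: x_def)
    qed
    have "mtrace (traj_step d U Ob IN KN y (Xg g) * B) = mtrace (Xg g * Phi y)"
      unfolding Phi_def by (rule step_dual[OF y Xc B])
    then show "F (g(x := y)) = (\<Prod>k\<in>S. w k (g k)) * (w x y * mtrace (Xg g * Phi y))"
      unfolding F_def pr ts by simp
  qed
  also have "\<dots> = (\<Sum>y\<in>U. \<Sum>g\<in>PiE S (\<lambda>_. U). (\<Prod>k\<in>S. w k (g k)) * (w x y * mtrace (Xg g * Phi y)))"
    by (rule sum.cartesian_product[symmetric])
  also have "\<dots> = (\<Sum>g\<in>PiE S (\<lambda>_. U). \<Sum>y\<in>U. (\<Prod>k\<in>S. w k (g k)) * (w x y * mtrace (Xg g * Phi y)))"
    by (rule sum.swap)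
  also have "\<dots> = (\<Sum>g\<in>PiE S (\<lambda>_. U). (\<Prod>k\<in>S. w k (g k)) * mtrace (Xg g * Psi d U Ob IN KN (w x) B))"
  proof (intro sum.cong refl)
    fix g
    have "(\<Sum>y\<in>U. (\<Prod>k\<in>S. w k (g k)) * (w x y * mtrace (Xg g * Phi y)))
        = (\<Prod>k\<in>S. w k (g k)) * (\<Sum>y\<in>U. w x y * mtrace (Xg g * Phi y))"
      by (simp add: sum_distrib_left)
    also have "(\<Sum>y\<in>U. w x y * mtrace (Xg g * Phi y)) = mtrace (Xg g * Psi d U Ob IN KN (w x) B)"
      unfolding Phi_def by (rule psi_trace[OF Xc B])
    finally show "(\<Sum>y\<in>U. (\<Prod>k\<in>S. w k (g k)) * (w x y * mtrace (Xg g * Phi y)))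
        = (\<Prod>k\<in>S. w k (g k)) * mtrace (Xg g * Psi d U Ob IN KN (w x) B)" .
  qed
  also have "\<dots> = mtrace (\<rho>0 * chain d U Ob IN KN w K (Psi d U Ob IN KN (w x) B))"
    unfolding S_def Xg_def
    by (rule Suc.IH) (simp add: Psi_def wadj_def)
  finally show ?case unfolding F_def x_def by simp
qed

end




lemma sum_div_mod_pairs:
  fixes f :: "nat \<Rightarrow> nat \<Rightarrow> complex"
  shows "(\<Sum>k<d*d. f (k div d) (k mod d)) = (\<Sum>b<d. \<Sum>a<d. f b a)"
proof -
  have "(\<Sum>k<d*d. f (k div d) (k mod d)) = (\<Sum>(b,a)\<in>{..<d} \<times> {..<d}. f b a)"
  proof (rule sum.reindex_bij_witness[of _ "\<lambda>(b,a). b * d + a" "\<lambda>k. (k div d, k mod d)"])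
    fix k assume k: "k \<in> {..<d*d}"
    then have d0: "d > 0" by (cases d) auto
    show "(case (k div d, k mod d) of (b, a) \<Rightarrow> b * d + a) = k" by simp
    show "(k div d, k mod d) \<in> {..<d} \<times> {..<d}"
      using k d0 by (auto simp: less_mult_imp_div_less)
    show "(case (k div d, k mod d) of (b, a) \<Rightarrow> f b a) = f (k div d) (k mod d)" by simp
  next
    fix p assume p: "p \<in> {..<d} \<times> {..<d}"
    obtain b a where ba: "p = (b,a)" "b < d" "a < d" using p by auto
    show "(case p of (b, a) \<Rightarrow> b * d + a) \<in> {..<d*d}"
    proof -
      have "b * d + a < b * d + d" using ba by simp
      also have "\<dots> = (b + 1) * d" by simp
      also have "\<dots> \<le> d * d" using ba by (intro mult_right_mono) auto
      finally show ?thesis using ba by simp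
    qed
    show "((case p of (b, a) \<Rightarrow> b * d + a) div d, (case p of (b, a) \<Rightarrow> b * d + a) mod d) = p"
      using ba by auto
  qed
  also have "\<dots> = (\<Sum>b<d. \<Sum>a<d. f b a)" by (rule sum.cartesian_product[symmetric])
  finally show ?thesis .
qed

lemma mtrace_as_sum:
  assumes "W \<in> carrier_mat d d" "Z \<in> carrier_mat d d"
  shows "mtrace (W * Z) = (\<Sum>k<d*d. W $$ (k mod d, k div d) * Z $$ (k div d, k mod d))"
proof -
  have "mtrace (W * Z) = (\<Sum>a<d. \<Sum>b<d. W $$ (a, b) * Z $$ (b, a))"
    using assms by (simp del: index_mult_mat add: mtrace_carrier[of _ d] mult_entry[where d=d])
  also have "\<dots> = (\<Sum>b<d. \<Sum>a<d. W $$ (a, b) * Z $$ (b, a))"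
    by (rule sum.swap)
  also have "\<dots> = (\<Sum>k<d*d. W $$ (k mod d, k div d) * Z $$ (k div d, k mod d))"
    by (rule sum_div_mod_pairs[where f = "\<lambda>b a. W $$ (a, b) * Z $$ (b, a)", symmetric])
  finally show ?thesis .
qed

lemma sum_shift1: "(\<Sum>j\<in>{1..n}. f j) = (\<Sum>j<n. f (Suc j))"
  by (induction n) auto

lemma completeness:
  fixes Y :: "nat \<Rightarrow> complex mat" and P Q X :: "complex mat"
  assumes P: "P \<in> carrier_mat d d" and Q: "Q \<in> carrier_mat d d"
    and Ycar: "\<And>i. i \<in> {1..d^2} \<Longrightarrow> Y i \<in> carrier_mat d d"
    and orth: "\<And>i j. i \<in> {1..d^2} \<Longrightarrow> j \<in> {1..d^2} \<Longrightarrow>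
        mtrace (adj (Y i) * P * Y j * Q) = (if i = j then 1 else 0)"
    and X: "X \<in> carrier_mat d d"
  shows "X = msum d {1..d^2} (\<lambda>j. mtrace (adj (Y j) * P * X * Q) \<cdot>\<^sub>m Y j)"
proof -
  define N where "N = d * d"
  have N2: "d^2 = N" unfolding N_def by (simp add: power2_eq_square)
  define W where "W = (\<lambda>i. Q * adj (Y i) * P)"
  have Wc: "\<And>i. i \<in> {1..d^2} \<Longrightarrow> W i \<in> carrier_mat d d"
    unfolding W_def using P Q Ycar by auto
  have trW: "mtrace (adj (Y i) * P * Z * Q) = mtrace (W i * Z)" if i: "i \<in> {1..d^2}" and Z: "Z \<in> carrier_mat d d" for i Z
  proof -
    have A: "adj (Y i) \<in> carrier_mat d d" using Ycar[OF i] by simp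
    have "mtrace (adj (Y i) * P * Z * Q) = mtrace (Q * (adj (Y i) * P * Z))"
      by (rule mtrace_comm) (use A P Z Q in auto)
    also have "Q * (adj (Y i) * P * Z) = Q * adj (Y i) * P * Z"
      using A P Z Q by (simp add: assoc3[of _ d])
    finally show ?thesis unfolding W_def .
  qed
  define E where "E = mat N N (\<lambda>(i,k). W (Suc i) $$ (k mod d, k div d))"
  define F where "F = mat N N (\<lambda>(k,j). Y (Suc j) $$ (k div d, k mod d))"
  have Ec: "E \<in> carrier_mat N N" and Fc: "F \<in> carrier_mat N N" unfolding E_def F_def by auto
  have EF: "E * F = 1\<^sub>m N"
  proof (rule eq_matI)
    fix i j assume "i < dim_row (1\<^sub>m N)" "j < dim_col (1\<^sub>m N)"
    then have ij: "i < N" "j < N" by auto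
    then have i1: "Suc i \<in> {1..d^2}" and j1: "Suc j \<in> {1..d^2}" unfolding N2 by auto
    have "(E * F) $$ (i,j) = (\<Sum>k<N. W (Suc i) $$ (k mod d, k div d) * Y (Suc j) $$ (k div d, k mod d))"
      using ij Ec Fc by (simp del: index_mult_mat add: mult_entry[where d=N]) (simp add: E_def F_def)
    also have "\<dots> = mtrace (W (Suc i) * Y (Suc j))"
      unfolding N_def by (rule mtrace_as_sum[symmetric]) (use Wc[OF i1] Ycar[OF j1] in auto)
    also have "\<dots> = mtrace (adj (Y (Suc i)) * P * Y (Suc j) * Q)"
      by (rule trW[symmetric, OF i1 Ycar[OF j1]])
    also have "\<dots> = 1\<^sub>m N $$ (i,j)" using orth[OF i1 j1] ij by simp
    finally show "(E * F) $$ (i,j) = 1\<^sub>m N $$ (i,j)" .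
  qed (use Ec Fc in auto)
  have FE: "F * E = 1\<^sub>m N" by (rule mat_mult_left_right_inverse[OF Ec Fc EF])
  define c where "c = (\<lambda>j. mtrace (adj (Y j) * P * X * Q))"
  have cj: "c (Suc j) = (\<Sum>k<N. E $$ (j,k) * X $$ (k div d, k mod d))" if j: "j < N" for j
  proof -
    have j1: "Suc j \<in> {1..d^2}" using j unfolding N2 by auto
    have "c (Suc j) = mtrace (W (Suc j) * X)" unfolding c_def by (rule trW[OF j1 X])
    also have "\<dots> = (\<Sum>k<N. W (Suc j) $$ (k mod d, k div d) * X $$ (k div d, k mod d))"
      unfolding N_def by (rule mtrace_as_sum) (use Wc[OF j1] X in auto)
    also have "\<dots> = (\<Sum>k<N. E $$ (j,k) * X $$ (k div d, k mod d))"
      using j by (intro sum.cong refl) (simp add: E_def)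
    finally show ?thesis .
  qed
  have "X = msum d {1..d^2} (\<lambda>j. c j \<cdot>\<^sub>m Y j)"
  proof (rule eq_matI)
    fix a b assume "a < dim_row (msum d {1..d^2} (\<lambda>j. c j \<cdot>\<^sub>m Y j))" "b < dim_col (msum d {1..d^2} (\<lambda>j. c j \<cdot>\<^sub>m Y j))"
    then have ab: "a < d" "b < d" by auto
    define k0 where "k0 = a * d + b"
    have k0: "k0 < N" "k0 div d = a" "k0 mod d = b"
    proof -
      have "a * d + b < a * d + d" using ab by simp
      also have "\<dots> = (a + 1) * d" by simp
      also have "\<dots> \<le> d * d" using ab by (intro mult_right_mono) auto
      finally show "k0 < N" unfolding k0_def N_def .
      show "k0 div d = a" "k0 mod d = b" unfolding k0_def using ab by auto
    qed
    have "(\<Sum>k<N. 1\<^sub>m N $$ (k0,k) * X $$ (k div d, k mod d)) = (\<Sum>k<N. if k = k0 then X $$ (k div d, k mod d) else 0)"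
      using k0 by (intro sum.cong refl) auto
    also have "\<dots> = X $$ (a,b)" using k0 by simp
    finally have "X $$ (a,b) = (\<Sum>k<N. 1\<^sub>m N $$ (k0,k) * X $$ (k div d, k mod d))" by simp
    also have "\<dots> = (\<Sum>k<N. (\<Sum>j<N. F $$ (k0,j) * E $$ (j,k)) * X $$ (k div d, k mod d))"
      unfolding FE[symmetric] using k0 Ec Fc
      by (intro sum.cong refl) (simp del: index_mult_mat add: mult_entry[where d=N])
    also have "\<dots> = (\<Sum>k<N. \<Sum>j<N. F $$ (k0,j) * (E $$ (j,k) * X $$ (k div d, k mod d)))"
      by (simp add: sum_distrib_right mult.assoc)
    also have "\<dots> = (\<Sum>j<N. \<Sum>k<N. F $$ (k0,j) * (E $$ (j,k) * X $$ (k div d, k mod d)))"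
      by (rule sum.swap)
    also have "\<dots> = (\<Sum>j<N. F $$ (k0,j) * (\<Sum>k<N. E $$ (j,k) * X $$ (k div d, k mod d)))"
      by (simp add: sum_distrib_left)
    also have "\<dots> = (\<Sum>j<N. c (Suc j) * Y (Suc j) $$ (a,b))"
      using k0 by (intro sum.cong refl) (simp add: cj F_def)
    also have "\<dots> = (\<Sum>j\<in>{1..d^2}. c j * Y j $$ (a,b))"
      unfolding N2 by (rule sum_shift1[symmetric])
    also have "\<dots> = msum d {1..d^2} (\<lambda>j. c j \<cdot>\<^sub>m Y j) $$ (a,b)"
    proof -
      have "\<And>j. j \<in> {1..d^2} \<Longrightarrow> (c j \<cdot>\<^sub>m Y j) $$ (a,b) = c j * Y j $$ (a,b)"
      proof -
        fix j assume "j \<in> {1..d^2}"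
        then have "dim_row (Y j) = d" "dim_col (Y j) = d" using Ycar by auto
        then show "(c j \<cdot>\<^sub>m Y j) $$ (a,b) = c j * Y j $$ (a,b)" using ab by simp
      qed
      then show ?thesis using ab by simp
    qed
    finally show "X $$ (a,b) = msum d {1..d^2} (\<lambda>j. c j \<cdot>\<^sub>m Y j) $$ (a,b)" .
  qed (use X in auto)
  then show ?thesis unfolding c_def .
qed




lemma chan_one:
  assumes "is_channel d I K"
  shows "kraus_adj d I K (1\<^sub>m d) = 1\<^sub>m d"
proof -
  have K: "\<And>u. u \<in> I \<Longrightarrow> K u \<in> carrier_mat d d" using assms unfolding is_channel_def by auto
  have "kraus_adj d I K (1\<^sub>m d) = msum d I (\<lambda>u. adj (K u) * K u)"
    unfolding kraus_adj_def by (intro msum_cong) (metis K adj_carrier right_mult_one_mat)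
  then show ?thesis using assms unfolding is_channel_def by simp
qed

lemma mtrace_msum_smult:
  assumes R: "R \<in> carrier_mat d d" and M: "\<And>j. j \<in> J \<Longrightarrow> M j \<in> carrier_mat d d"
  shows "mtrace (R * msum d J (\<lambda>j. c j \<cdot>\<^sub>m M j)) = (\<Sum>j\<in>J. c j * mtrace (R * M j))"
proof -
  have "R * msum d J (\<lambda>j. c j \<cdot>\<^sub>m M j) = msum d J (\<lambda>j. R * (c j \<cdot>\<^sub>m M j))"
    by (rule mult_msum_left) (use R M in auto)
  then have "mtrace (R * msum d J (\<lambda>j. c j \<cdot>\<^sub>m M j)) = (\<Sum>j\<in>J. mtrace (R * (c j \<cdot>\<^sub>m M j)))"
    using mtrace_msum[of J "\<lambda>j. R * (c j \<cdot>\<^sub>m M j)" d] R M by simp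
  also have "\<dots> = (\<Sum>j\<in>J. c j * mtrace (R * M j))"
    by (intro sum.cong refl mtrace_mult_smult) (use R M in auto)
  finally show ?thesis .
qed

theorem lemma5p9:
  fixes n :: nat and H :: "complex mat" and \<beta> s :: real
    and U :: "real set" and Ob :: "real \<Rightarrow> complex mat"
    and IN :: "'k set" and KN :: "'k \<Rightarrow> complex mat"
    and Y :: "nat \<Rightarrow> complex mat" and lam :: "nat \<Rightarrow> real"
    and K t p :: nat
  defines "d \<equiv> 2 ^ n"
    and "\<rho> \<equiv> gibbs H \<beta>"
    and "v \<equiv> meas_expect U Ob (gibbs H \<beta>)"
    and "Eadj \<equiv> (\<lambda>X. kraus_adj (2 ^ n) U Ob (kraus_adj (2 ^ n) IN KN (kraus_adj (2 ^ n) U Ob X)))"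
    and "Ehatadj \<equiv> (\<lambda>X. hat_meas_adj (2 ^ n) U Ob (meas_expect U Ob (gibbs H \<beta>))
                           (kraus_adj (2 ^ n) IN KN (kraus_adj (2 ^ n) U Ob X)))"
  assumes H: "H \<in> carrier_mat d d" "adj H = H"
    and beta: "\<beta> > 0"
    and chN: "is_channel d IN KN"
    and chM: "is_channel d U Ob"
    and dbN: "s_detailed_balance d H \<beta> s (kraus_adj d IN KN)"
    and dbM: "s_detailed_balance d H \<beta> s (kraus_adj d U Ob)"
    and fixN: "unique_fixed_state d (kraus_map d IN KN) \<rho>"
    and specN: "spectrum_in_01 d (kraus_map d IN KN)"
    and Ycar: "\<And>i. i \<in> {1..d^2} \<Longrightarrow> Y i \<in> carrier_mat d d"
    and Yon: "\<And>i j. i \<in> {1..d^2} \<Longrightarrow> j \<in> {1..d^2} \<Longrightarrow>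
                 s_inner H \<beta> s (Y i) (Y j) = (if i = j then 1 else 0)"
    and Yeig: "\<And>i. i \<in> {1..d^2} \<Longrightarrow> Eadj (Y i) = complex_of_real (lam i) \<cdot>\<^sub>m Y i"
    and lam1: "lam 1 = 1" and Y1: "Y 1 = 1\<^sub>m d"
    and lam2: "\<And>i. i \<in> {2..d^2} \<Longrightarrow> lam i < 1"
    and lammono: "\<And>i j. 2 \<le> i \<Longrightarrow> i \<le> j \<Longrightarrow> j \<le> d^2 \<Longrightarrow> lam j \<le> lam i"
    and lampos: "\<And>i. i \<in> {1..d^2} \<Longrightarrow> 0 \<le> lam i"
    and tp: "t > 0" "p > 0" "t + p \<le> K"
  shows "traj_expect d U Ob IN KN \<rho> 0 K
           (\<lambda>e. (complex_of_real (e t) - v) * (complex_of_real (e (t + p)) - v))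
         = (\<Sum>j\<in>{2..d^2}. s_inner H \<beta> s (Y j) (Ehatadj (Y 1)) * s_inner H \<beta> s (Y 1) (Ehatadj (Y j))
                          * complex_of_real (lam j ^ (p - 1)))"
proof -
  define Ma where "Ma = kraus_adj d U Ob"
  define Na where "Na = kraus_adj d IN KN"
  define P1 where "P1 = gibbs_pow H \<beta> (1 - s)"
  define Ps where "Ps = gibbs_pow H \<beta> s"
  define J where "J = {1..d^2}"
  have Ea: "\<And>X. Eadj X = Ma (Na (Ma X))" unfolding Eadj_def Ma_def Na_def d_def by simp
  have Eh: "\<And>X. Ehatadj X = hat_meas_adj d U Ob v (Na (Ma X))"
    unfolding Ehatadj_def Ma_def Na_def d_def v_def by simp
  have Obc: "\<And>u. u \<in> U \<Longrightarrow> Ob u \<in> carrier_mat d d" and finU: "finite U"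
    using chM unfolding is_channel_def by auto
  have KNc: "\<And>k. k \<in> IN \<Longrightarrow> KN k \<in> carrier_mat d d" using chN unfolding is_channel_def by auto
  have d0: "d > 0" unfolding d_def by simp
  have one_J: "1 \<in> J" unfolding J_def using d0 by (simp add: Suc_le_eq)
  have P1c: "P1 \<in> carrier_mat d d" and Psc: "Ps \<in> carrier_mat d d"
    unfolding P1_def Ps_def using H by (auto intro: gibbs_pow_carrier)
  have rhoc: "\<rho> \<in> carrier_mat d d" unfolding \<rho>_def by (rule gibbs_carrier[OF H(1)])
  have inner: "\<And>A B. s_inner H \<beta> s A B = mtrace (adj A * P1 * B * Ps)"
    unfolding s_inner_def P1_def Ps_def by simp
  have norm: "mtrace (P1 * Ps) = 1"
    using Yon[OF one_J[unfolded J_def] one_J[unfolded J_def]] P1c Psc unfolding inner Y1 by simp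
  have split: "Ps * P1 = \<rho>"
    unfolding Ps_def P1_def \<rho>_def by (rule gibbs_split[OF H(1)]) (use norm in \<open>simp add: P1_def Ps_def\<close>)
  have rho_inner: "s_inner H \<beta> s (1\<^sub>m d) X = mtrace (\<rho> * X)" if X: "X \<in> carrier_mat d d" for X
  proof -
    have "s_inner H \<beta> s (1\<^sub>m d) X = mtrace (P1 * X * Ps)" unfolding inner using P1c by simp
    also have "\<dots> = mtrace (Ps * (P1 * X))" by (rule mtrace_comm) (use P1c X Psc in auto)
    also have "Ps * (P1 * X) = Ps * P1 * X" using Psc P1c X by (simp add: assoc3[of _ d])
    finally show ?thesis unfolding split .
  qed
  have tr_rho: "mtrace \<rho> = 1"
    using Yon[OF one_J[unfolded J_def] one_J[unfolded J_def]] rho_inner[of "1\<^sub>m d"] rhoc unfolding Y1 by simp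
  have Ma1: "Ma (1\<^sub>m d) = 1\<^sub>m d" unfolding Ma_def by (rule chan_one[OF chM])
  have Na1: "Na (1\<^sub>m d) = 1\<^sub>m d" unfolding Na_def by (rule chan_one[OF chN])
  have Mac: "\<And>X. Ma X \<in> carrier_mat d d" unfolding Ma_def kraus_adj_def by simp
  have Nac: "\<And>X. Na X \<in> carrier_mat d d" unfolding Na_def kraus_adj_def by simp
  have invM: "mtrace (\<rho> * Ma X) = mtrace (\<rho> * X)" if X: "X \<in> carrier_mat d d" for X
  proof -
    have "s_inner H \<beta> s (1\<^sub>m d) (Ma X) = s_inner H \<beta> s (Ma (1\<^sub>m d)) X"
      using dbM X unfolding s_detailed_balance_def Ma_def by auto
    then show ?thesis using rho_inner[OF X] rho_inner[OF Mac[of X]] Ma1 by simp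
  qed
  have invN: "mtrace (\<rho> * Na X) = mtrace (\<rho> * X)" if X: "X \<in> carrier_mat d d" for X
  proof -
    have "s_inner H \<beta> s (1\<^sub>m d) (Na X) = s_inner H \<beta> s (Na (1\<^sub>m d)) X"
      using dbN X unfolding s_detailed_balance_def Na_def by auto
    then show ?thesis using rho_inner[OF X] rho_inner[OF Nac[of X]] Na1 by simp
  qed
  have invE: "mtrace (\<rho> * Eadj X) = mtrace (\<rho> * X)" if X: "X \<in> carrier_mat d d" for X
    unfolding Ea using invM[OF Nac[of "Ma X"]] invN[OF Mac[of X]] invM[OF X] by simp
  have Ea1: "Eadj (1\<^sub>m d) = 1\<^sub>m d" unfolding Ea Ma1 Na1 Ma1 ..
  have Eac: "\<And>X. Eadj X \<in> carrier_mat d d" unfolding Ea by (rule Mac)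
  have Ehc: "\<And>X. Ehatadj X \<in> carrier_mat d d" unfolding Eh hat_meas_adj_def by simp
  have MaW: "Ma = wadj d U Ob (\<lambda>_. 1)" unfolding Ma_def by (rule ext) (rule kraus_adj_wadj)
  have NaW: "Na = wadj d IN KN (\<lambda>_. 1)" unfolding Na_def by (rule ext) (rule kraus_adj_wadj)
  have linM: "linmap d Ma" unfolding MaW by (rule linmap_wadj[OF Obc])
  have linN: "linmap d Na" unfolding NaW by (rule linmap_wadj[OF KNc])
  have linNM: "linmap d (\<lambda>X. Na (Ma X))" by (rule linmap_comp[OF linN linM])
  have linEa: "linmap d Eadj"
  proof -
    have "linmap d (\<lambda>X. Ma (Na (Ma X)))" by (rule linmap_comp[OF linM linNM])
    moreover have "Eadj = (\<lambda>X. Ma (Na (Ma X)))" using Ea by (intro ext) simp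
    ultimately show ?thesis by simp
  qed
  have linEh: "linmap d Ehatadj"
  proof -
    have "linmap d (\<lambda>X. wadj d U Ob (\<lambda>u. complex_of_real u - v) (Na (Ma X)))"
      by (rule linmap_comp[OF linmap_wadj[OF Obc] linNM])
    moreover have "Ehatadj = (\<lambda>X. wadj d U Ob (\<lambda>u. complex_of_real u - v) (Na (Ma X)))"
      using Eh by (intro ext) (simp add: hat_meas_adj_wadj)
    ultimately show ?thesis by simp
  qed
  define w :: "nat \<Rightarrow> real \<Rightarrow> complex" where
    "w = (\<lambda>k u. (if k = t then complex_of_real u - v else 1) * (if k = t + p then complex_of_real u - v else 1))"
  have tK: "t \<in> {1..K}" "t + p \<in> {1..K}" using tp by auto
  have fprod: "(complex_of_real (e t) - v) * (complex_of_real (e (t + p)) - v) = (\<Prod>k\<in>{1..K}. w k (e k))" for e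
    unfolding w_def prod.distrib using tK by simp
  have texp: "traj_expect d U Ob IN KN \<rho> 0 K
           (\<lambda>e. (complex_of_real (e t) - v) * (complex_of_real (e (t + p)) - v))
       = (\<Sum>e\<in>PiE {1..K} (\<lambda>_. U). (\<Prod>k\<in>{1..K}. w k (e k)) * mtrace (traj_state d U Ob IN KN \<rho> e K * 1\<^sub>m d))"
    unfolding traj_expect_def fprod
    by (intro sum.cong refl) (simp add: mult.commute right_mult_one_mat[OF traj_state_carrier[OF rhoc]])
  also have "\<dots> = mtrace (\<rho> * chain d U Ob IN KN w K (1\<^sub>m d))"
    by (rule traj_sum[OF Obc KNc finU rhoc]) auto
  finally have texp: "traj_expect d U Ob IN KN \<rho> 0 K
           (\<lambda>e. (complex_of_real (e t) - v) * (complex_of_real (e (t + p)) - v))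
       = mtrace (\<rho> * chain d U Ob IN KN w K (1\<^sub>m d))" .
  have PsiE: "Psi d U Ob IN KN (w k) B = Eadj B" if "k \<noteq> t" "k \<noteq> t + p" for k B
  proof -
    have "w k = (\<lambda>_. 1)" using that unfolding w_def by (intro ext) simp
    then show ?thesis unfolding Psi_def Ea Ma_def Na_def by (simp add: kraus_adj_wadj)
  qed
  have PsiH: "Psi d U Ob IN KN (w k) B = Ehatadj B" if "k = t \<or> k = t + p" for k B
  proof -
    have "w k = (\<lambda>u. complex_of_real u - v)" using that tp unfolding w_def by (intro ext) auto
    then show ?thesis unfolding Psi_def Eh Ma_def Na_def by (simp add: hat_meas_adj_wadj)
  qed
  have c1: "chain d U Ob IN KN w (t + p + j) (1\<^sub>m d) = chain d U Ob IN KN w (t + p) (1\<^sub>m d)" for j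
  proof (induction j)
    case 0 then show ?case by simp
  next
    case (Suc j)
    have "chain d U Ob IN KN w (t + p + Suc j) (1\<^sub>m d) = chain d U Ob IN KN w (t + p + j) (Psi d U Ob IN KN (w (Suc (t + p + j))) (1\<^sub>m d))"
      by simp
    also have "Psi d U Ob IN KN (w (Suc (t + p + j))) (1\<^sub>m d) = 1\<^sub>m d"
      using PsiE[of "Suc (t + p + j)" "1\<^sub>m d"] Ea1 by simp
    finally show ?case using Suc by simp
  qed
  have c2: "j \<le> p - 1 \<Longrightarrow> chain d U Ob IN KN w (t + j) B = chain d U Ob IN KN w t ((Eadj ^^ j) B)" for j B
  proof (induction j arbitrary: B)
    case 0 then show ?case by simp
  next
    case (Suc j)
    have "chain d U Ob IN KN w (t + Suc j) B = chain d U Ob IN KN w (t + j) (Psi d U Ob IN KN (w (Suc (t + j))) B)"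
      by simp
    also have "Psi d U Ob IN KN (w (Suc (t + j))) B = Eadj B"
      using Suc.prems tp by (intro PsiE) auto
    also have "chain d U Ob IN KN w (t + j) (Eadj B) = chain d U Ob IN KN w t ((Eadj ^^ j) (Eadj B))"
      using Suc by simp
    finally show ?case by (simp add: funpow_swap1)
  qed
  have c3: "m < t \<Longrightarrow> B \<in> carrier_mat d d \<Longrightarrow> mtrace (\<rho> * chain d U Ob IN KN w m B) = mtrace (\<rho> * B)" for m B
  proof (induction m arbitrary: B)
    case 0 then show ?case by simp
  next
    case (Suc m)
    have "chain d U Ob IN KN w (Suc m) B = chain d U Ob IN KN w m (Eadj B)"
      using Suc.prems PsiE[of "Suc m" B] by simp
    then show ?case using Suc.IH[of "Eadj B"] Suc.prems Eac invE by simp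
  qed
  define Z where "Z = Ehatadj ((Eadj ^^ (p - 1)) (Ehatadj (1\<^sub>m d)))"
  have chainK: "chain d U Ob IN KN w K (1\<^sub>m d) = chain d U Ob IN KN w (t - 1) Z"
  proof -
    have "chain d U Ob IN KN w K (1\<^sub>m d) = chain d U Ob IN KN w (t + p) (1\<^sub>m d)"
      using c1[of "K - (t + p)"] tp by simp
    also have "\<dots> = chain d U Ob IN KN w (Suc (t + (p - 1))) (1\<^sub>m d)"
    proof -
      have e: "t + p = Suc (t + (p - 1))" using tp by simp
      show ?thesis by (simp only: e)
    qed
    also have "\<dots> = chain d U Ob IN KN w (t + (p - 1)) (Psi d U Ob IN KN (w (Suc (t + (p - 1)))) (1\<^sub>m d))"
      by (simp only: chain.simps)
    also have "Psi d U Ob IN KN (w (Suc (t + (p - 1)))) (1\<^sub>m d) = Ehatadj (1\<^sub>m d)"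
      by (rule PsiH) (use tp in simp)
    also have "chain d U Ob IN KN w (t + (p - 1)) (Ehatadj (1\<^sub>m d)) = chain d U Ob IN KN w t ((Eadj ^^ (p - 1)) (Ehatadj (1\<^sub>m d)))"
      by (rule c2) simp
    also have "\<dots> = chain d U Ob IN KN w (Suc (t - 1)) ((Eadj ^^ (p - 1)) (Ehatadj (1\<^sub>m d)))"
    proof -
      have e: "t = Suc (t - 1)" using tp by simp
      show ?thesis by (subst e) (rule refl)
    qed
    also have "\<dots> = chain d U Ob IN KN w (t - 1) (Psi d U Ob IN KN (w (Suc (t - 1))) ((Eadj ^^ (p - 1)) (Ehatadj (1\<^sub>m d))))"
      by (simp only: chain.simps)
    also have "Psi d U Ob IN KN (w (Suc (t - 1))) ((Eadj ^^ (p - 1)) (Ehatadj (1\<^sub>m d))) = Z"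
      unfolding Z_def by (rule PsiH) (use tp in simp)
    finally show ?thesis .
  qed
  have Zc: "Z \<in> carrier_mat d d" unfolding Z_def by (rule Ehc)
  have val: "traj_expect d U Ob IN KN \<rho> 0 K
           (\<lambda>e. (complex_of_real (e t) - v) * (complex_of_real (e (t + p)) - v)) = mtrace (\<rho> * Z)"
    unfolding texp chainK using c3[OF _ Zc] tp by simp
  define \<alpha> where "\<alpha> = (\<lambda>j. s_inner H \<beta> s (Y j) (Ehatadj (Y 1)))"
  have Yc: "\<And>j. j \<in> J \<Longrightarrow> Y j \<in> carrier_mat d d" unfolding J_def by (rule Ycar)
  have exp1: "Ehatadj (1\<^sub>m d) = msum d J (\<lambda>j. \<alpha> j \<cdot>\<^sub>m Y j)"
  proof -
    have "Ehatadj (1\<^sub>m d) = msum d {1..d^2} (\<lambda>j. mtrace (adj (Y j) * P1 * Ehatadj (1\<^sub>m d) * Ps) \<cdot>\<^sub>m Y j)"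
      using Ycar Yon[unfolded inner] Ehc by (rule completeness[OF P1c Psc])
    then show ?thesis unfolding \<alpha>_def inner J_def Y1 .
  qed
  have exp2: "(Eadj ^^ (p - 1)) (Ehatadj (1\<^sub>m d)) = msum d J (\<lambda>j. (\<alpha> j * complex_of_real (lam j) ^ (p - 1)) \<cdot>\<^sub>m Y j)"
  proof -
    have eigJ: "\<And>j. j \<in> J \<Longrightarrow> Eadj (Y j) = complex_of_real (lam j) \<cdot>\<^sub>m Y j"
      unfolding J_def by (rule Yeig)
    show ?thesis unfolding exp1 by (rule linmap_eigen_pow[OF linEa Yc eigJ])
  qed
  have exp3: "Z = msum d J (\<lambda>j. (\<alpha> j * complex_of_real (lam j) ^ (p - 1)) \<cdot>\<^sub>m Ehatadj (Y j))"
  proof -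
    have "Z = Ehatadj (msum d J (\<lambda>j. (\<alpha> j * complex_of_real (lam j) ^ (p - 1)) \<cdot>\<^sub>m Y j))"
      unfolding Z_def exp2 ..
    also have "\<dots> = msum d J (\<lambda>j. Ehatadj ((\<alpha> j * complex_of_real (lam j) ^ (p - 1)) \<cdot>\<^sub>m Y j))"
      by (rule linmap_D(3)[OF linEh]) (use Yc in auto)
    also have "\<dots> = msum d J (\<lambda>j. (\<alpha> j * complex_of_real (lam j) ^ (p - 1)) \<cdot>\<^sub>m Ehatadj (Y j))"
      by (intro msum_cong linmap_D(2)[OF linEh] Yc)
    finally show ?thesis .
  qed
  have trZ: "mtrace (\<rho> * Z) = (\<Sum>j\<in>J. \<alpha> j * s_inner H \<beta> s (Y 1) (Ehatadj (Y j)) * complex_of_real (lam j ^ (p - 1)))"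
  proof -
    have "mtrace (\<rho> * Z) = (\<Sum>j\<in>J. (\<alpha> j * complex_of_real (lam j) ^ (p - 1)) * mtrace (\<rho> * Ehatadj (Y j)))"
      unfolding exp3 by (rule mtrace_msum_smult[OF rhoc Ehc])
    also have "\<dots> = (\<Sum>j\<in>J. \<alpha> j * s_inner H \<beta> s (Y 1) (Ehatadj (Y j)) * complex_of_real (lam j ^ (p - 1)))"
    proof (intro sum.cong refl)
      fix j
      have r: "mtrace (\<rho> * Ehatadj (Y j)) = s_inner H \<beta> s (Y 1) (Ehatadj (Y j))"
        unfolding Y1 by (rule rho_inner[OF Ehc, symmetric])
      show "(\<alpha> j * complex_of_real (lam j) ^ (p - 1)) * mtrace (\<rho> * Ehatadj (Y j)) =
          \<alpha> j * s_inner H \<beta> s (Y 1) (Ehatadj (Y j)) * complex_of_real (lam j ^ (p - 1))"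
        unfolding r by (simp add: mult_ac)
    qed
    finally show ?thesis .
  qed
  have alpha1: "\<alpha> 1 = 0"
  proof -
    define tau where "tau = (\<lambda>u. mtrace (\<rho> * (adj (Ob u) * 1\<^sub>m d * Ob u)))"
    have tau: "tau u = mtrace (Ob u * \<rho> * adj (Ob u))" if u: "u \<in> U" for u
    proof -
      have "adj (Ob u) * 1\<^sub>m d * Ob u = adj (Ob u) * Ob u" by (metis Obc[OF u] adj_carrier right_mult_one_mat)
      then have "tau u = mtrace (\<rho> * (adj (Ob u) * Ob u))" unfolding tau_def by simp
      also have "\<rho> * (adj (Ob u) * Ob u) = (\<rho> * adj (Ob u)) * Ob u"
        using rhoc Obc[OF u] by (simp add: assoc3[of _ d])
      also have "mtrace ((\<rho> * adj (Ob u)) * Ob u) = mtrace (Ob u * (\<rho> * adj (Ob u)))"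
        by (rule mtrace_comm) (use rhoc Obc[OF u] in auto)
      also have "Ob u * (\<rho> * adj (Ob u)) = Ob u * \<rho> * adj (Ob u)"
        using rhoc Obc[OF u] by (simp add: assoc3[of _ d])
      finally show ?thesis .
    qed
    have sumtau: "(\<Sum>u\<in>U. tau u) = 1"
    proof -
      have "(\<Sum>u\<in>U. tau u) = mtrace (\<rho> * Ma (1\<^sub>m d))"
        unfolding tau_def Ma_def kraus_adj_def
        using mtrace_msum_smult[OF rhoc, of U "\<lambda>u. adj (Ob u) * 1\<^sub>m d * Ob u" "\<lambda>_. 1"] Obc
        by (simp add: one_smult_mat')
      then show ?thesis using Ma1 rhoc tr_rho by simp
    qed
    have vv: "v = (\<Sum>u\<in>U. complex_of_real u * tau u)"
      unfolding v_def meas_expect_def \<rho>_def[symmetric] using tau by (intro sum.cong refl) simp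
    have "\<alpha> 1 = mtrace (\<rho> * Ehatadj (1\<^sub>m d))" unfolding \<alpha>_def Y1 by (rule rho_inner[OF Ehc])
    also have "Ehatadj (1\<^sub>m d) = msum d U (\<lambda>u. (complex_of_real u - v) \<cdot>\<^sub>m (adj (Ob u) * 1\<^sub>m d * Ob u))"
      unfolding Eh Ma1 Na1 hat_meas_adj_def ..
    also have "mtrace (\<rho> * \<dots>) = (\<Sum>u\<in>U. (complex_of_real u - v) * tau u)"
      unfolding tau_def by (rule mtrace_msum_smult[OF rhoc]) (use Obc in simp)
    also have "\<dots> = (\<Sum>u\<in>U. complex_of_real u * tau u) - v * (\<Sum>u\<in>U. tau u)"
      by (simp add: algebra_simps sum_subtractf sum_distrib_left)
    also have "\<dots> = 0" using vv sumtau by simp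
    finally show ?thesis .
  qed
  have Jsplit: "J = insert 1 {2..d^2}" and n1: "1 \<notin> {2..d^2::nat}"
    unfolding J_def using d0 by (auto simp: Suc_le_eq)
  have "traj_expect d U Ob IN KN \<rho> 0 K
           (\<lambda>e. (complex_of_real (e t) - v) * (complex_of_real (e (t + p)) - v))
      = (\<Sum>j\<in>J. \<alpha> j * s_inner H \<beta> s (Y 1) (Ehatadj (Y j)) * complex_of_real (lam j ^ (p - 1)))"
    unfolding val trZ ..
  also have "\<dots> = (\<Sum>j\<in>{2..d^2}. \<alpha> j * s_inner H \<beta> s (Y 1) (Ehatadj (Y j)) * complex_of_real (lam j ^ (p - 1)))"
    unfolding Jsplit using n1 alpha1 by simp
  finally show ?thesis unfolding \<alpha>_def .
qed


end
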